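(* Let $0<b<a<n$, let $\ell\in\{-1,1\}^n$, and let $A$ be the adjacency matrix of $SBM(a/n,b/n)$ with communities labelled by $\ell$. Let $C=(\sqrt a-\sqrt b)^2$ and $L=\ell\ell^T$. Let $\kappa\ge1$ and $K\ge10^4$, and assume $C\ge10^4$. Define $\theta=\exp\big(-C/2+3\kappa+K\sqrt{a+b}\log R(a/n,b/n)\big)$. Then with probability at least $1-e^{-10\kappa}-1/n^2$, for all $x_1,\dots,x_n\in[0,1]$ with $x_1+\dots+x_n\le10^{-6}n$, \[ \Big\langle (A-D(a/n,b/n)J)\odot L,\ X\Big\rangle\ \ge\ \big(K(x_1+\dots+x_n)-\theta n\big)\sqrt{a+b}-\frac{\max\big(0,10^4(\kappa-\sqrt C)\big)}{\log R(a/n,b/n)}, \] where $X$ is the $n\times n$ matrix with $X_{ij}=x_i$.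
   Context: $SBM(a/n,b/n)$ with communities labelled by $\ell\in\{-1,1\}^n$: the adjacency matrix $A$ is symmetric with zero diagonal, and the entries $A_{ij}$, $i<j$, are independent Bernoulli with mean $a/n$ if $\ell_i=\ell_j$ and $b/n$ otherwise. $J$ is the all-ones matrix, $\odot$ is the entrywise (Hadamard) product, and $\langle X,Y\rangle=\sum_{i,j}X_{ij}Y_{ij}$. $R(p,q)=\frac{p(1-q)}{q(1-p)}$ and $D(p,q)=\log\frac{1-q}{1-p}\big/\log R(p,q)$. *)

theory Defs
  imports "HOL-Probability.Probability"
begin

definition R_ratio :: "real \<Rightarrow> real \<Rightarrow> real" where
  "R_ratio p q = (p * (1 - q)) / (q * (1 - p))"

definition D_thr :: "real \<Rightarrow> real \<Rightarrow> real" where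
  "D_thr p q = ln ((1 - q) / (1 - p)) / ln (R_ratio p q)"

text \<open>Vertices are 0..<n. The random object is the indicator of the edges
 {i,j} with i<j; the entries for i<j are independent Bernoulli with mean p_in
 if labels agree and p_out otherwise.\<close>

definition upper_pairs :: "nat \<Rightarrow> (nat \<times> nat) set" where
  "upper_pairs n = {(i, j). i < j \<and> j < n}"

definition SBM :: "nat \<Rightarrow> real \<Rightarrow> real \<Rightarrow> (nat \<Rightarrow> int) \<Rightarrow> (nat \<times> nat \<Rightarrow> bool) pmf" where
  "SBM n a b l = Pi_pmf (upper_pairs n) False
     (\<lambda>(i, j). bernoulli_pmf (if l i = l j then a / real n else b / real n))"

definition adj :: "(nat \<times> nat \<Rightarrow> bool) \<Rightarrow> nat \<Rightarrow> nat \<Rightarrow> real" where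
  "adj G i j = (if i < j then (if G (i, j) then 1 else 0)
                else if j < i then (if G (j, i) then 1 else 0) else 0)"

end

theory Submission
  imports Defs
begin



lemma lp_select:
  fixes u x :: "nat \<Rightarrow> real"
  assumes "finite I" "\<forall>i\<in>I. 0 \<le> x i \<and> x i \<le> 1" "\<forall>i\<in>I. 0 \<le> u i"
    "(\<Sum>i\<in>I. x i) \<le> real k"
  shows "\<exists>S\<subseteq>I. card S \<le> k \<and> (\<Sum>i\<in>I. x i * u i) \<le> (\<Sum>i\<in>S. u i)"
  using assms
proof (induction k arbitrary: I x)
  case 0
  have "\<forall>i\<in>I. x i = 0"
  proof
    fix i assume "i \<in> I"
    have "x i \<le> (\<Sum>i\<in>I. x i)"
      using 0 \<open>i \<in> I\<close> by (intro member_le_sum) auto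
    thus "x i = 0" using 0 \<open>i \<in> I\<close> by force
  qed
  thus ?case by (intro exI[of _ "{}"]) auto
next
  case (Suc k)
  show ?case
  proof (cases "I = {}")
    case True thus ?thesis by (intro exI[of _ "{}"]) auto
  next
    case False
    have fin: "finite (u ` I)" "u ` I \<noteq> {}" using Suc.prems(1) False by auto
    obtain i0 where "i0 \<in> I" "u i0 = Max (u ` I)" using Max_in[OF fin] by auto
    hence i0: "i0 \<in> I" "\<forall>i\<in>I. u i \<le> u i0" using Max_ge[OF fin(1)] by auto
    define J where "J = I - {i0}"
    define \<sigma> where "\<sigma> = (\<Sum>i\<in>J. x i)"
    define r where "r = (if \<sigma> \<le> real k then 1 else real k / \<sigma>)"
    have finJ: "finite J" using Suc.prems(1) J_def by auto
    have sI: "(\<Sum>i\<in>I. x i) = x i0 + \<sigma>"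
      using Suc.prems(1) i0(1) unfolding \<sigma>_def J_def by (simp add: sum.remove)
    have sIu: "(\<Sum>i\<in>I. x i * u i) = x i0 * u i0 + (\<Sum>i\<in>J. x i * u i)"
      using Suc.prems(1) i0(1) unfolding J_def by (simp add: sum.remove)
    have sig0: "\<sigma> \<ge> 0" unfolding \<sigma>_def using Suc.prems(2) J_def by (intro sum_nonneg) auto
    have r01: "0 \<le> r" "r \<le> 1" using sig0 by (auto simp: r_def field_simps)
    have rs: "r * \<sigma> \<le> real k"
      using sig0 by (auto simp: r_def)
    have one_r: "(1 - r) * \<sigma> \<le> 1 - x i0"
    proof (cases "\<sigma> \<le> real k")
      case True thus ?thesis using Suc.prems(2) i0(1) by (simp add: r_def)
    next
      case False
      hence "(1 - r) * \<sigma> = \<sigma> - real k" using sig0 by (simp add: r_def field_simps)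
      thus ?thesis using sI Suc.prems(4) by simp
    qed
    have "\<exists>S\<subseteq>J. card S \<le> k \<and> (\<Sum>i\<in>J. (r * x i) * u i) \<le> (\<Sum>i\<in>S. u i)"
    proof (rule Suc.IH)
      show "finite J" by (rule finJ)
      show "\<forall>i\<in>J. 0 \<le> r * x i \<and> r * x i \<le> 1"
        using Suc.prems(2) r01 J_def by (auto intro: mult_le_one)
      show "\<forall>i\<in>J. 0 \<le> u i" using Suc.prems(3) J_def by auto
      show "(\<Sum>i\<in>J. r * x i) \<le> real k" using rs by (simp add: \<sigma>_def sum_distrib_left)
    qed
    then obtain S where S: "S \<subseteq> J" "card S \<le> k" "(\<Sum>i\<in>J. (r * x i) * u i) \<le> (\<Sum>i\<in>S. u i)"
      by blast
    have "(\<Sum>i\<in>J. x i * u i) = (\<Sum>i\<in>J. (r * x i) * u i) + (1 - r) * (\<Sum>i\<in>J. x i * u i)"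
      by (simp add: sum_distrib_left algebra_simps sum.distrib[symmetric])
    also have "(\<Sum>i\<in>J. x i * u i) \<le> (\<Sum>i\<in>J. x i * u i0)"
      using Suc.prems(2) i0 J_def by (intro sum_mono mult_left_mono) auto
    hence "(1 - r) * (\<Sum>i\<in>J. x i * u i) \<le> (1 - r) * (\<Sum>i\<in>J. x i * u i0)"
      using r01 by (intro mult_left_mono) auto
    also have "(\<Sum>i\<in>J. x i * u i0) = \<sigma> * u i0" by (simp add: \<sigma>_def sum_distrib_right)
    also have "(1 - r) * (\<sigma> * u i0) \<le> (1 - x i0) * u i0"
      using one_r Suc.prems(3) i0(1) by (simp add: mult.assoc[symmetric] mult_right_mono)
    finally have "(\<Sum>i\<in>J. x i * u i) \<le> (\<Sum>i\<in>S. u i) + (1 - x i0) * u i0"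
      using S(3) by linarith
    hence "(\<Sum>i\<in>I. x i * u i) \<le> u i0 + (\<Sum>i\<in>S. u i)"
      using sIu by (simp add: algebra_simps)
    also have "\<dots> = (\<Sum>i\<in>insert i0 S. u i)"
      using S(1) finJ J_def by (subst sum.insert) (auto intro: finite_subset)
    finally show ?thesis
      using S finJ J_def i0(1)
      by (intro exI[of _ "insert i0 S"]) (auto simp: card_insert_if dest: finite_subset)
  qed
qed



lemma upper_pairs_Suc:
  "upper_pairs (Suc n) = upper_pairs n \<union> (\<lambda>i. (i, n)) ` {..<n}"
  by (auto simp: upper_pairs_def)

lemma finite_upper_pairs[simp]: "finite (upper_pairs n)"
proof -
  have "upper_pairs n \<subseteq> {..<n} \<times> {..<n}" by (auto simp: upper_pairs_def)
  thus ?thesis by (rule finite_subset) auto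
qed

lemma double_sum_upper:
  fixes f :: "nat \<Rightarrow> nat \<Rightarrow> real"
  shows "(\<Sum>i<n. \<Sum>j<n. f i j) =
     (\<Sum>e\<in>upper_pairs n. f (fst e) (snd e) + f (snd e) (fst e)) + (\<Sum>i<n. f i i)"
proof (induction n)
  case 0
  then show ?case by (simp add: upper_pairs_def)
next
  case (Suc n)
  have disj: "upper_pairs n \<inter> (\<lambda>i. (i, n)) ` {..<n} = {}"
    by (auto simp: upper_pairs_def)
  have inj: "inj_on (\<lambda>i. (i, n)) {..<n}" by (auto simp: inj_on_def)
  have "(\<Sum>e\<in>upper_pairs (Suc n). f (fst e) (snd e) + f (snd e) (fst e)) =
        (\<Sum>e\<in>upper_pairs n. f (fst e) (snd e) + f (snd e) (fst e)) +
        (\<Sum>i<n. f i n + f n i)"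
    unfolding upper_pairs_Suc
    by (subst sum.union_disjoint) (use disj inj in \<open>auto simp: sum.reindex\<close>)
  moreover have "(\<Sum>i<Suc n. \<Sum>j<Suc n. f i j) =
     (\<Sum>i<n. \<Sum>j<n. f i j) + (\<Sum>i<n. f i n + f n i) + f n n"
    by (simp add: sum.distrib)
  ultimately show ?case using Suc.IH by simp
qed

lemma adj_sym: "adj G i j = adj G j i"
  by (auto simp: adj_def)

lemma adj_upper: "(i, j) \<in> upper_pairs n \<Longrightarrow> adj G i j = (if G (i, j) then 1 else 0)"
  by (auto simp: adj_def upper_pairs_def)

lemma sum_c_decomp:
  fixes l :: "nat \<Rightarrow> int" and D :: real
  assumes l: "\<forall>i<n. l i \<in> {-1, 1}" and S: "S \<subseteq> {..<n}"
  shows "(\<Sum>i\<in>S. \<Sum>j<n. (adj G i j - D) * real_of_int (l i * l j)) =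
     - D * real (card S) +
     (\<Sum>e\<in>upper_pairs n. real ((if fst e \<in> S then 1 else 0) + (if snd e \<in> S then 1 else 0 :: nat))
        * ((if G e then 1 else 0) - D) * real_of_int (l (fst e) * l (snd e)))"
proof -
  define F where "F i j = (adj G i j - D) * real_of_int (l i * l j)" for i j
  define f where "f i j = (if i \<in> S then 1 else 0) * F i j" for i j
  have "(\<Sum>i\<in>S. \<Sum>j<n. F i j) = (\<Sum>i<n. \<Sum>j<n. f i j)"
  proof -
    have "(\<Sum>i<n. f i j) = (\<Sum>i<n. if i \<in> S then F i j else 0)" for j
      unfolding f_def by (intro sum.cong) auto
    have "(\<Sum>i<n. \<Sum>j<n. f i j) = (\<Sum>i<n. if i \<in> S then (\<Sum>j<n. F i j) else 0)"
      unfolding f_def by (intro sum.cong) (auto simp: sum_distrib_left)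
    also have "\<dots> = (\<Sum>i\<in>S. \<Sum>j<n. F i j)"
    proof -
      have "{x. x < n \<and> x \<in> S} = S" using S by auto
      thus ?thesis by (simp add: sum.If_cases Int_def)
    qed
    finally show ?thesis by simp
  qed
  also have "\<dots> = (\<Sum>e\<in>upper_pairs n. f (fst e) (snd e) + f (snd e) (fst e)) + (\<Sum>i<n. f i i)"
    by (rule double_sum_upper)
  also have "(\<Sum>i<n. f i i) = (\<Sum>i<n. (if i \<in> S then - D else 0))"
  proof (intro sum.cong refl)
    fix i assume "i \<in> {..<n}"
    hence "l i * l i = 1" using l by auto
    thus "f i i = (if i \<in> S then - D else 0)"
      by (simp add: f_def F_def adj_def)
  qed
  also have "\<dots> = - D * real (card S)"
    using S by (simp add: sum.If_cases Int_absorb1)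
  also have "(\<Sum>e\<in>upper_pairs n. f (fst e) (snd e) + f (snd e) (fst e)) =
     (\<Sum>e\<in>upper_pairs n. real ((if fst e \<in> S then 1 else 0) + (if snd e \<in> S then 1 else 0 :: nat))
        * ((if G e then 1 else 0) - D) * real_of_int (l (fst e) * l (snd e)))"
  proof (intro sum.cong refl)
    fix e assume e: "e \<in> upper_pairs n"
    obtain i j where ij: "e = (i, j)" by force
    have "F j i = F i j" by (simp add: F_def adj_sym mult.commute)
    moreover have "F i j = ((if G e then 1 else 0) - D) * real_of_int (l i * l j)"
      using e ij by (simp add: F_def adj_upper)
    ultimately show "f (fst e) (snd e) + f (snd e) (fst e) = real ((if fst e \<in> S then 1 else 0) + (if snd e \<in> S then 1 else 0 :: nat))
        * ((if G e then 1 else 0) - D) * real_of_int (l (fst e) * l (snd e))"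
      using ij by (simp add: f_def algebra_simps)
  qed
  finally show ?thesis by (simp add: F_def add.commute)
qed

lemma card_cross_edges:
  assumes S: "S \<subseteq> {..<n}"
  shows "card S * (n - card S) \<le>
    card {e\<in>upper_pairs n. (if fst e \<in> S then 1 else 0) + (if snd e \<in> S then 1 else 0 :: nat) = 1}"
proof -
  define E1 where "E1 = {e\<in>upper_pairs n. (if fst e \<in> S then 1 else 0) + (if snd e \<in> S then 1 else 0 :: nat) = 1}"
  define h where "h = (\<lambda>(i::nat, j::nat). (min i j, max i j))"
  have "inj_on h (S \<times> ({..<n} - S))"
    unfolding inj_on_def h_def by (auto simp: min_def max_def split: if_splits)
  moreover have "h ` (S \<times> ({..<n} - S)) \<subseteq> E1"
    using S unfolding h_def E1_def upper_pairs_def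
    by (auto simp: min_def max_def split: if_splits; metis le_neq_implies_less)
  moreover have "finite E1" unfolding E1_def by auto
  ultimately have "card (S \<times> ({..<n} - S)) \<le> card E1"
    by (intro card_inj_on_le) auto
  moreover have "card (S \<times> ({..<n} - S)) = card S * (n - card S)"
    using S by (simp add: card_cartesian_product card_Diff_subset finite_subset)
  ultimately show ?thesis unfolding E1_def by simp
qed



lemma R_gt1:
  fixes p q :: real assumes "0 < q" "q < p" "p < 1"
  shows "R_ratio p q > 1"
proof -
  have "q * (1 - p) < p * (1 - q)" using assms by (simp add: algebra_simps)
  moreover have "q * (1 - p) > 0" using assms by simp
  ultimately show ?thesis unfolding R_ratio_def by simp
qed

lemma exp_facts:
  fixes p q :: real assumes pq: "0 < q" "q < p" "p < 1"
  defines "L \<equiv> ln (R_ratio p q)" and "D \<equiv> D_thr p q"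
  shows "exp (L * D) = (1 - q) / (1 - p)" "exp (- L * (1 - D)) = q / p" "L > 0"
proof -
  have R1: "R_ratio p q > 1" using R_gt1 pq by blast
  show L0: "L > 0" unfolding L_def using R1 by simp
  have "L * D = ln ((1 - q) / (1 - p))" unfolding D_def D_thr_def L_def[symmetric]
    using L0 by simp
  thus e1: "exp (L * D) = (1 - q) / (1 - p)" using pq by simp
  have eL: "exp L = R_ratio p q" unfolding L_def using R1 by simp
  have "- L * (1 - D) = L * D - L" by (simp add: algebra_simps)
  hence "exp (- L * (1 - D)) = exp (L * D) / exp L" by (simp add: exp_diff)
  also have "\<dots> = ((1 - q) / (1 - p)) / ((p * (1 - q)) / (q * (1 - p)))"
    by (simp add: e1 eL R_ratio_def)
  also have "\<dots> = q / p"
  proof -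
    have gg: "x \<noteq> 0 \<Longrightarrow> y \<noteq> 0 \<Longrightarrow> p \<noteq> 0 \<Longrightarrow> q \<noteq> 0 \<Longrightarrow> (y/x)/((p*y)/(q*x)) = q/(p::real)" for x y
      by (simp add: field_simps)
    have "1 - p \<noteq> 0" "1 - q \<noteq> 0" "p \<noteq> 0" "q \<noteq> 0" using pq by auto
    thus ?thesis by (rule gg)
  qed
  finally show "exp (- L * (1 - D)) = q / p" .
qed

lemma exp_half_sqrt: "exp (x / 2) = sqrt (exp x)"
proof -
  have "exp x = (exp (x/2))^2" by (simp add: power2_eq_square flip: exp_add)
  thus ?thesis by simp
qed

lemma edge_bound:
  fixes p q s :: real and m :: nat
  assumes pq: "0 < q" "q < p" "p < 1" and m: "m \<le> 2" and s: "s = 1 \<or> s = -1"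
  defines "L \<equiv> ln (R_ratio p q)" and "D \<equiv> D_thr p q"
  defines "pe \<equiv> (if s = 1 then p else q)"
  shows "exp (- (L/2) * real m * (1 - D) * s) * pe + exp (- (L/2) * real m * (0 - D) * s) * (1 - pe)
     \<le> (if m = 1 then sqrt (p * q) + sqrt ((1 - p) * (1 - q)) else 1)"
proof -
  note ef = exp_facts[OF pq, folded L_def D_def]
  define a1 where "a1 = exp (- L * (1 - D) / 2)"
  define a2 where "a2 = exp (L * D / 2)"
  have a1: "a1 = sqrt (q / p)" unfolding a1_def exp_half_sqrt ef(2) ..
  have a2: "a2 = sqrt ((1 - q) / (1 - p))" unfolding a2_def exp_half_sqrt ef(1) ..
  have a1p: "a1 > 0" "a2 > 0" unfolding a1_def a2_def by auto
  have sq1: "a1 * a1 = q / p" using pq by (simp add: a1 flip: power2_eq_square)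
  have sq2: "a2 * a2 = (1 - q) / (1 - p)" using pq by (simp add: a2 flip: power2_eq_square)
  have e11: "exp (- (L/2) * 1 * (1 - D) * 1) = a1"
  proof -
    have "exp (- (L/2) * 1 * (1 - D) * 1) = exp (- L * (1 - D) / 2)"
      by (rule arg_cong[where f=exp]) (simp add: field_simps)
    thus ?thesis unfolding a1_def .
  qed
  have e12: "exp (- (L/2) * 1 * (0 - D) * 1) = a2"
  proof -
    have "exp (- (L/2) * 1 * (0 - D) * 1) = exp (L * D / 2)"
      by (rule arg_cong[where f=exp]) (simp add: field_simps)
    thus ?thesis unfolding a2_def .
  qed
  have e13: "exp (- (L/2) * 1 * (1 - D) * -1) = 1 / a1"
  proof -
    have "exp (- (L/2) * 1 * (1 - D) * -1) = exp (- (- L * (1 - D) / 2))"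
      by (rule arg_cong[where f=exp]) (simp add: field_simps)
    thus ?thesis unfolding a1_def by (simp only: exp_minus inverse_eq_divide)
  qed
  have e14: "exp (- (L/2) * 1 * (0 - D) * -1) = 1 / a2"
  proof -
    have "exp (- (L/2) * 1 * (0 - D) * -1) = exp (- (L * D / 2))"
      by (rule arg_cong[where f=exp]) (simp add: field_simps)
    thus ?thesis unfolding a2_def by (simp only: exp_minus inverse_eq_divide)
  qed
  have e21: "exp (- (L/2) * 2 * (1 - D) * 1) = a1 * a1"
  proof -
    have "exp (- (L/2) * 2 * (1 - D) * 1) = exp (- L * (1 - D) / 2 + - L * (1 - D) / 2)"
      by (rule arg_cong[where f=exp]) (simp add: field_simps)
    thus ?thesis unfolding a1_def by (simp only: exp_add)
  qed
  have e22: "exp (- (L/2) * 2 * (0 - D) * 1) = a2 * a2"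
  proof -
    have "exp (- (L/2) * 2 * (0 - D) * 1) = exp (L * D / 2 + L * D / 2)"
      by (rule arg_cong[where f=exp]) (simp add: field_simps)
    thus ?thesis unfolding a2_def by (simp only: exp_add)
  qed
  have e23: "exp (- (L/2) * 2 * (1 - D) * -1) = 1 / (a1 * a1)"
  proof -
    have "exp (- (L/2) * 2 * (1 - D) * -1) = exp (- (- L * (1 - D) / 2 + - L * (1 - D) / 2))"
      by (rule arg_cong[where f=exp]) (simp add: field_simps)
    thus ?thesis unfolding a1_def by (simp only: exp_minus exp_add inverse_eq_divide)
  qed
  have e24: "exp (- (L/2) * 2 * (0 - D) * -1) = 1 / (a2 * a2)"
  proof -
    have "exp (- (L/2) * 2 * (0 - D) * -1) = exp (- (L * D / 2 + L * D / 2))"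
      by (rule arg_cong[where f=exp]) (simp add: field_simps)
    thus ?thesis unfolding a2_def by (simp only: exp_minus exp_add inverse_eq_divide)
  qed
  have sqrtpq: "sqrt (q / p) * p = sqrt (p * q)" "sqrt ((1 - q) / (1 - p)) * (1 - p) = sqrt ((1 - p) * (1 - q))"
    "sqrt (p / q) * q = sqrt (p * q)" "sqrt ((1 - p) / (1 - q)) * (1 - q) = sqrt ((1 - p) * (1 - q))"
  proof -
    have g: "sqrt (x / y) * y = sqrt (y * x)" if "y > 0" "x \<ge> 0" for x y :: real
    proof -
      have sy: "sqrt y * sqrt y = y" using that by simp
      have "sqrt (x / y) * y = (sqrt x / sqrt y) * (sqrt y * sqrt y)" using that by (simp add: real_sqrt_divide sy)
      also have "\<dots> = sqrt x * sqrt y" using that by (simp add: field_simps)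
      also have "\<dots> = sqrt (y * x)" by (simp add: real_sqrt_mult)
      finally show ?thesis .
    qed
    show "sqrt (q / p) * p = sqrt (p * q)" using g[of p q] pq by simp
    show "sqrt ((1 - q) / (1 - p)) * (1 - p) = sqrt ((1 - p) * (1 - q))" using g[of "1-p" "1-q"] pq by simp
    show "sqrt (p / q) * q = sqrt (p * q)" using g[of q p] pq by (simp add: mult.commute)
    show "sqrt ((1 - p) / (1 - q)) * (1 - q) = sqrt ((1 - p) * (1 - q))" using g[of "1-q" "1-p"] pq by (simp add: mult.commute)
  qed
  have inv1: "1 / a1 = sqrt (p / q)" using a1 by (simp add: real_sqrt_divide)
  have inv2: "1 / a2 = sqrt ((1 - p) / (1 - q))" using a2 by (simp add: real_sqrt_divide)
  have m3: "m = 0 \<or> m = 1 \<or> m = 2" using m by auto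
  show ?thesis
  proof (cases "s = 1")
    case True
    then show ?thesis using m3
    proof (elim disjE)
      assume "m = 1" thus ?thesis using True e11 e12 a1 a2 sqrtpq pe_def by simp
    next
      assume "m = 2" thus ?thesis using True e21 e22 sq1 sq2 pq pe_def by simp
    qed (auto simp: pe_def)
  next
    case False
    hence s1: "s = -1" using s by simp
    then show ?thesis using m3
    proof (elim disjE)
      assume "m = 1" thus ?thesis using s1 e13 e14 inv1 inv2 sqrtpq pe_def by simp
    next
      assume "m = 2" thus ?thesis using s1 e23 e24 sq1 sq2 pq pe_def by (simp add: field_simps)
    qed (auto simp: pe_def)
  qed
qed

lemma beta_bound:
  fixes p q :: real assumes pq: "0 < q" "q < p" "p < 1"
  shows "sqrt (p * q) + sqrt ((1 - p) * (1 - q)) \<le> exp (- ((sqrt p - sqrt q)^2) / 2)"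
proof -
  have "sqrt ((1 - p) * (1 - q)) \<le> ((1 - p) + (1 - q)) / 2"
    using pq arith_geo_mean_sqrt[of "1-p" "1-q"] by simp
  moreover have "(sqrt p - sqrt q)^2 = p + q - 2 * sqrt (p * q)"
    using pq by (simp add: power2_diff real_sqrt_mult)
  ultimately have "sqrt (p * q) + sqrt ((1 - p) * (1 - q)) \<le> 1 + (- ((sqrt p - sqrt q)^2) / 2)"
    by (simp add: field_simps)
  also have "\<dots> \<le> exp (- ((sqrt p - sqrt q)^2) / 2)" by (rule exp_ge_add_one_self[simplified add.commute])
  finally show ?thesis .
qed



lemma binom_term_le:
  fixes y :: real assumes "y \<ge> 0" "k \<le> n"
  shows "real (n choose k) * y ^ k \<le> (1 + y) ^ n"
proof -
  have "(y + 1) ^ n = (\<Sum>j\<le>n. real (n choose j) * y ^ j * 1 ^ (n - j))"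
    by (rule binomial_ring)
  also have "\<dots> \<ge> real (n choose k) * y ^ k * 1 ^ (n - k)"
    using assms by (intro member_le_sum) auto
  finally show ?thesis by (simp add: add.commute)
qed

lemma binom_sum_le:
  fixes w :: real assumes "w \<ge> 0" "k0 \<le> n"
  shows "(\<Sum>k\<in>{1..k0}. real (n choose k) * w ^ k) \<le> (1 + w) ^ n - 1"
proof -
  have "(\<Sum>k\<in>{1..k0}. real (n choose k) * w ^ k) \<le> (\<Sum>k\<in>{1..n}. real (n choose k) * w ^ k)"
    using assms by (intro sum_mono2) auto
  also have "(\<Sum>k\<le>n. real (n choose k) * w ^ k) = (\<Sum>k\<in>{1..n}. real (n choose k) * w ^ k) + 1"
  proof -
    have "{..n} = insert 0 {1..n}" by auto
    thus ?thesis by (simp add: add.commute)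
  qed
  moreover have "(\<Sum>k\<le>n. real (n choose k) * w ^ k) = (w + 1) ^ n"
    by (subst binomial_ring) simp
  ultimately show ?thesis by (simp add: add.commute)
qed

lemma half_sum_le: "(\<Sum>k\<in>{1..m}. (1/2::real) ^ k) \<le> 1"
proof -
  have "(\<Sum>k\<in>{1..m}. (1/2::real) ^ k) = 1 - (1/2) ^ m"
    by (induction m) (auto simp: field_simps)
  thus ?thesis by simp
qed

lemma sum_bound:
  fixes n k0 :: nat and Lam mu C Y :: real
  assumes k0: "100 * k0 \<le> n" and Lam: "Lam \<ge> 0" and mu: "mu \<le> Lam / 10^6"
    and C: "C \<ge> 0" and Y: "exp 1 * real n * exp (- (C/2 - 2*Lam)) \<le> Y"
  shows "(\<Sum>k\<in>{1..k0}. real (n choose k) *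
            exp (real k * Lam + real k * mu - real k * (real n - real k) * C / (2 * real n)))
         \<le> exp (- 0.49 * Lam + Y)"
proof -
  define P where "P = C/2 - 2*Lam"
  define w where "w = exp (1 - P)"
  have w0: "w \<ge> 0" unfolding w_def by simp
  define g where "g k = real (n choose k) * exp (- real k * (1 - real k / real n) * P)" for k :: nat
  have step1: "real (n choose k) *
            exp (real k * Lam + real k * mu - real k * (real n - real k) * C / (2 * real n))
        \<le> exp (- 0.49 * Lam) * g k" if k: "k \<in> {1..k0}" for k
  proof -
    have k1: "real k \<ge> 1" "100 * real k \<le> real n" using k k0 by auto
    have npos: "real n > 0" using k1 by simp
    define r where "r = real k / real n"
    have r: "0 \<le> r" "r \<le> 1/100" using k1 npos unfolding r_def by (auto simp: field_simps)
    have eq: "real k * (real n - real k) * C / (2 * real n) = real k * (1 - r) * (P + 2 * Lam)"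
    proof -
      have "P + 2 * Lam = C / 2" by (simp add: P_def)
      hence "real k * (1 - r) * (P + 2 * Lam) = real k * (1 - real k / real n) * (C / 2)"
        by (simp add: r_def)
      also have "\<dots> = real k * (real n - real k) * C / (2 * real n)"
        using npos by (simp add: field_simps)
      finally show ?thesis by simp
    qed
    have a1: "real k * mu \<le> real k * (Lam / 10^6)" using mu k1 by (intro mult_left_mono) auto
    have a2: "2 * real k * (1 - r) * Lam \<ge> 2 * real k * (99/100) * Lam"
      using r Lam k1 by (intro mult_right_mono mult_left_mono) auto
    have a3: "real k * Lam \<ge> Lam" using k1 Lam by (simp add: mult_le_cancel_right1)
    have "real k * Lam + real k * mu - real k * (real n - real k) * C / (2 * real n)
        = real k * Lam + real k * mu - real k * (1 - r) * (P + 2 * Lam)"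
      by (subst eq) (rule refl)
    also have "\<dots> = real k * Lam + real k * mu - 2 * real k * (1 - r) * Lam - real k * (1 - r) * P"
      by (simp add: algebra_simps)
    also have "\<dots> \<le> - 0.49 * Lam - real k * (1 - real k / real n) * P"
    proof -
      have kr: "real k / real n = r" by (simp add: r_def)
      have "real k * Lam \<ge> 0" using k1 Lam by simp
      thus ?thesis using a1 a2 a3 unfolding kr by (simp add: algebra_simps)
    qed
    finally have "real k * Lam + real k * mu - real k * (real n - real k) * C / (2 * real n)
        \<le> - 0.49 * Lam + (- real k * (1 - real k / real n) * P)" by simp
    hence "exp (real k * Lam + real k * mu - real k * (real n - real k) * C / (2 * real n))
        \<le> exp (- 0.49 * Lam) * exp (- real k * (1 - real k / real n) * P)"
      by (simp add: exp_add[symmetric])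
    hence "real (n choose k) * exp (real k * Lam + real k * mu - real k * (real n - real k) * C / (2 * real n))
        \<le> real (n choose k) * (exp (- 0.49 * Lam) * exp (- real k * (1 - real k / real n) * P))"
      by (intro mult_left_mono) auto
    thus ?thesis unfolding g_def by (simp only: mult_ac)
  qed
  have step3: "g k \<le> real (n choose k) * w ^ k + (1/2) ^ k" if k: "k \<in> {1..k0}" for k
  proof -
    have k1: "real k \<ge> 1" "100 * real k \<le> real n" using k k0 by auto
    have npos: "real n > 0" using k1 by simp
    show ?thesis
    proof (cases "real k * P \<le> real n")
      case True
      have "real k * (real k * P / real n) \<le> real k * 1"
        using True npos k1 by (intro mult_left_mono) (auto simp: field_simps)
      hence "- real k * (1 - real k / real n) * P \<le> real k * (1 - P)"
        by (simp add: algebra_simps)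
      hence "exp (- real k * (1 - real k / real n) * P) \<le> w ^ k"
        unfolding w_def by (simp add: exp_of_nat_mult[symmetric])
      hence "g k \<le> real (n choose k) * w ^ k" unfolding g_def by (intro mult_left_mono) auto
      moreover have "(0::real) \<le> (1/2) ^ k" by simp
      ultimately show ?thesis by linarith
    next
      case False
      hence "real k * 100 < real k * P" using k1 by linarith
      hence P100: "P \<ge> 100" using k1 by (simp add: mult_less_cancel_left)
      have Ppos: "P > 0" using P100 by simp
      define y where "y = real k / real n"
      have y0: "y > 0" using k1 npos unfolding y_def by simp
      have kn: "k \<le> n" using k1 by simp
      have "real (n choose k) * y ^ k \<le> (1 + y) ^ n" by (rule binom_term_le) (use y0 kn in auto)
      also have "\<dots> \<le> exp y ^ n"
        by (intro power_mono) (use y0 exp_ge_add_one_self[of y] in \<open>auto simp: add.commute\<close>)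
      also have "\<dots> = exp (real k)" using npos unfolding y_def
        by (simp add: exp_of_nat_mult[symmetric])
      finally have b1: "real (n choose k) * y ^ k \<le> exp 1 ^ k" by (simp add: exp_of_nat_mult[symmetric])
      have "1 / y < P" using False npos k1 unfolding y_def by (simp add: field_simps)
      hence b2: "(1 / y) ^ k \<le> P ^ k" using y0 by (intro power_mono) auto
      have "real (n choose k) = real (n choose k) * y ^ k * (1 / y) ^ k"
        using y0 by (simp add: power_one_over field_simps)
      also have "\<dots> \<le> exp 1 ^ k * P ^ k"
        using b1 b2 y0 by (intro mult_mono) auto
      finally have cb: "real (n choose k) \<le> (exp 1 * P) ^ k" by (simp add: power_mult_distrib)
      have "- real k * (1 - real k / real n) * P \<le> real k * (- P / 2)"
      proof -
        have "real k / real n \<le> 1/2" using k1 npos by (simp add: field_simps)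
        hence "(1/2) * P \<le> (1 - real k / real n) * P" using Ppos by (intro mult_right_mono) auto
        hence "real k * ((1/2) * P) \<le> real k * ((1 - real k / real n) * P)" using k1 by (intro mult_left_mono) auto
        moreover have "- real k * (1 - real k / real n) * P = - (real k * ((1 - real k / real n) * P))" by simp
        moreover have "real k * (- P / 2) = - (real k * ((1/2) * P))" by simp
        ultimately show ?thesis by linarith
      qed
      hence ce: "exp (- real k * (1 - real k / real n) * P) \<le> exp (- P / 2) ^ k"
        by (simp add: exp_of_nat_mult[symmetric])
      have "g k \<le> (exp 1 * P) ^ k * exp (- P / 2) ^ k"
        unfolding g_def using cb ce by (intro mult_mono) auto
      also have "\<dots> = (exp 1 * P * exp (- P / 2)) ^ k" by (simp add: power_mult_distrib)
      also have "\<dots> \<le> (1/2) ^ k"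
      proof (intro power_mono)
        have "1 + P/2 + (P/2)^2/2 \<le> exp (P/2)" using Ppos by (intro exp_lower_Taylor_quadratic) auto
        moreover have "2 * 3 * P \<le> (P/2)^2/2" using P100 by (simp add: power2_eq_square field_simps)
        moreover have "exp 1 \<le> (3::real)" by (rule exp_le)
        moreover have "2 * exp 1 * P \<le> 2 * 3 * P" using Ppos \<open>exp 1 \<le> (3::real)\<close> by (intro mult_right_mono) auto
        ultimately have "2 * exp 1 * P \<le> exp (P/2)" using Ppos by linarith
        hence "exp 1 * P * exp (- P / 2) * exp (P/2) \<le> (1/2) * exp (P/2)"
          by (simp add: exp_minus field_simps)
        thus "exp 1 * P * exp (- P / 2) \<le> 1/2" by simp
        show "0 \<le> exp 1 * P * exp (- P / 2)" using Ppos by simp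
      qed
      finally have "g k \<le> (1/2) ^ k" .
      moreover have "0 \<le> real (n choose k) * w ^ k" using w0 by simp
      ultimately show ?thesis by linarith
    qed
  qed
  have "(\<Sum>k\<in>{1..k0}. real (n choose k) *
            exp (real k * Lam + real k * mu - real k * (real n - real k) * C / (2 * real n)))
        \<le> (\<Sum>k\<in>{1..k0}. exp (- 0.49 * Lam) * g k)"
    by (intro sum_mono step1)
  also have "\<dots> = exp (- 0.49 * Lam) * (\<Sum>k\<in>{1..k0}. g k)" by (simp add: sum_distrib_left)
  also have "(\<Sum>k\<in>{1..k0}. g k) \<le> (\<Sum>k\<in>{1..k0}. real (n choose k) * w ^ k) + (\<Sum>k\<in>{1..k0}. (1/2::real) ^ k)"
    unfolding sum.distrib[symmetric] by (intro sum_mono step3)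
  also have "\<dots> \<le> ((1 + w) ^ n - 1) + 1"
    using binom_sum_le[OF w0, of k0 n] half_sum_le[of k0] k0 by simp
  also have "\<dots> = (1 + w) ^ n" by simp
  also have "\<dots> \<le> exp w ^ n"
    by (intro power_mono) (use w0 exp_ge_add_one_self[of w] in \<open>auto simp: add.commute\<close>)
  also have "\<dots> = exp (real n * w)" by (simp add: exp_of_nat_mult[symmetric])
  also have "\<dots> \<le> exp Y"
  proof -
    have "real n * w = exp 1 * real n * exp (- P)" unfolding w_def by (simp add: exp_diff exp_minus field_simps)
    hence "real n * w \<le> Y" using Y unfolding P_def by linarith
    thus ?thesis by simp
  qed
  finally show ?thesis by (simp only: exp_add) (simp add: mult_left_mono)
qed




lemma finite_set_SBM: "finite (set_pmf (SBM n a b l))"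
  unfolding SBM_def
  by (rule finite_subset[OF set_Pi_pmf_subset']) (auto intro!: finite_PiE_dflt)

lemma integrable_SBM: "integrable (measure_pmf (SBM n a b l)) (f :: _ \<Rightarrow> real)"
  by (rule integrable_measure_pmf_finite[OF finite_set_SBM])

lemma expect_S:
  fixes n :: nat and a b :: real and l :: "nat \<Rightarrow> int"
  assumes ab: "0 < b" "b < a" "a < real n" and l: "\<forall>i<n. l i \<in> {-1, 1}" and S: "S \<subseteq> {..<n}"
  defines "p \<equiv> a / real n" and "q \<equiv> b / real n"
  defines "L \<equiv> ln (R_ratio p q)" and "D \<equiv> D_thr p q"
  shows "measure_pmf.expectation (SBM n a b l)
      (\<lambda>G. exp (- (L/2) * (\<Sum>i\<in>S. \<Sum>j<n. (adj G i j - D) * real_of_int (l i * l j))))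
   \<le> exp ((L/2) * D * real (card S) - real (card S) * (real n - real (card S)) * ((sqrt a - sqrt b)^2) / (2 * real n))"
proof -
  have npos: "real n > 0" using ab by simp
  have pq: "0 < q" "q < p" "p < 1" using ab npos unfolding p_def q_def by (auto simp: field_simps)
  define m where "m e = (if fst e \<in> S then 1 else 0) + (if snd e \<in> S then 1 else 0 :: nat)" for e :: "nat \<times> nat"
  define s where "s e = real_of_int (l (fst e) * l (snd e))" for e :: "nat \<times> nat"
  define f where "f e b = exp (- (L/2) * real (m e) * ((if b then 1 else 0) - D) * s e)" for e b
  define \<beta> where "\<beta> = sqrt (p * q) + sqrt ((1 - p) * (1 - q))"
  define k where "k = card S"
  have decomp: "exp (- (L/2) * (\<Sum>i\<in>S. \<Sum>j<n. (adj G i j - D) * real_of_int (l i * l j)))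
      = exp ((L/2) * D * real k) * (\<Prod>e\<in>upper_pairs n. f e (G e))" for G
  proof -
    have "- (L/2) * (\<Sum>i\<in>S. \<Sum>j<n. (adj G i j - D) * real_of_int (l i * l j))
        = (L/2) * D * real k + (\<Sum>e\<in>upper_pairs n. - (L/2) * real (m e) * ((if G e then 1 else 0) - D) * s e)"
    proof -
      have e1: "(\<Sum>i\<in>S. \<Sum>j<n. (adj G i j - D) * real_of_int (l i * l j))
          = - D * real k + (\<Sum>e\<in>upper_pairs n. real (m e) * ((if G e then 1 else 0) - D) * s e)"
        unfolding k_def m_def s_def by (rule sum_c_decomp[OF l S])
      have e2: "- (L/2) * (- D * real k + (\<Sum>e\<in>upper_pairs n. real (m e) * ((if G e then 1 else 0) - D) * s e))
          = (L/2) * D * real k + (\<Sum>e\<in>upper_pairs n. - (L/2) * (real (m e) * ((if G e then 1 else 0) - D) * s e))"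
      proof -
        define Q where "Q = (\<Sum>e\<in>upper_pairs n. real (m e) * ((if G e then 1 else 0) - D) * s e)"
        have "(\<Sum>e\<in>upper_pairs n. - (L/2) * (real (m e) * ((if G e then 1 else 0) - D) * s e)) = - (L/2) * Q"
          unfolding Q_def by (rule sum_distrib_left[symmetric])
        moreover have "- (L/2) * (- D * real k + Q) = (L/2) * D * real k + - (L/2) * Q"
          by (simp add: algebra_simps)
        ultimately show ?thesis unfolding Q_def by simp
      qed
      show ?thesis unfolding e1 e2 by (simp only: mult.assoc)
    qed
    thus ?thesis unfolding f_def by (simp add: exp_add exp_sum)
  qed
  have pe: "(case e of (i, j) \<Rightarrow> bernoulli_pmf (if l i = l j then a / real n else b / real n))
       = bernoulli_pmf (if s e = 1 then p else q)" if e: "e \<in> upper_pairs n" for e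
  proof -
    obtain i j where ij: "e = (i, j)" "i < n" "j < n" using e by (auto simp: upper_pairs_def)
    have "l i = l j \<longleftrightarrow> l i * l j = 1" using l ij by auto
    hence h2: "(s e = 1) = (l i = l j)" using ij by (simp add: s_def del: of_int_mult)
    show ?thesis unfolding h2 using ij by (simp add: p_def q_def)
  qed
  have s_pm: "s e = 1 \<or> s e = -1" if e: "e \<in> upper_pairs n" for e
  proof -
    obtain i j where ij: "e = (i, j)" "i < n" "j < n" using e by (auto simp: upper_pairs_def)
    have "l i = -1 \<or> l i = 1" "l j = -1 \<or> l j = 1" using l ij by auto
    thus ?thesis using ij by (auto simp: s_def)
  qed
  have edge: "measure_pmf.expectation (bernoulli_pmf (if s e = 1 then p else q)) (f e)
      \<le> (if m e = 1 then \<beta> else 1)" if e: "e \<in> upper_pairs n" for e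
  proof -
    have pe01: "0 \<le> (if s e = 1 then p else q)" "(if s e = 1 then p else q) \<le> 1" using pq by auto
    have "m e \<le> 2" by (simp add: m_def)
    hence "exp (- (L/2) * real (m e) * (1 - D) * s e) * (if s e = 1 then p else q)
         + exp (- (L/2) * real (m e) * (0 - D) * s e) * (1 - (if s e = 1 then p else q))
       \<le> (if m e = 1 then \<beta> else 1)"
      using edge_bound[OF pq, of "m e" "s e"] s_pm[OF e] unfolding L_def D_def \<beta>_def by blast
    thus ?thesis using pe01 by (simp add: f_def)
  qed
  have "measure_pmf.expectation (SBM n a b l)
      (\<lambda>G. exp (- (L/2) * (\<Sum>i\<in>S. \<Sum>j<n. (adj G i j - D) * real_of_int (l i * l j))))
     = exp ((L/2) * D * real k) * measure_pmf.expectation (SBM n a b l) (\<lambda>G. \<Prod>e\<in>upper_pairs n. f e (G e))"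
    unfolding decomp by simp
  also have "measure_pmf.expectation (SBM n a b l) (\<lambda>G. \<Prod>e\<in>upper_pairs n. f e (G e))
     = (\<Prod>e\<in>upper_pairs n. measure_pmf.expectation (bernoulli_pmf (if s e = 1 then p else q)) (f e))"
  proof -
    have "measure_pmf.expectation (SBM n a b l) (\<lambda>G. \<Prod>e\<in>upper_pairs n. f e (G e))
       = (\<Prod>e\<in>upper_pairs n. measure_pmf.expectation
            ((\<lambda>(i, j). bernoulli_pmf (if l i = l j then a / real n else b / real n)) e) (f e))"
      unfolding SBM_def
      by (rule expectation_prod_Pi_pmf) (auto intro: integrable_measure_pmf_finite simp: f_def)
    also have "\<dots> = (\<Prod>e\<in>upper_pairs n. measure_pmf.expectation (bernoulli_pmf (if s e = 1 then p else q)) (f e))"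
      by (intro prod.cong refl) (simp add: pe)
    finally show ?thesis .
  qed
  also have "\<dots> \<le> (\<Prod>e\<in>upper_pairs n. (if m e = 1 then \<beta> else 1))"
  proof (intro prod_mono conjI)
    fix e assume e: "e \<in> upper_pairs n"
    show "measure_pmf.expectation (bernoulli_pmf (if s e = 1 then p else q)) (f e) \<le> (if m e = 1 then \<beta> else 1)"
      by (rule edge[OF e])
    show "0 \<le> measure_pmf.expectation (bernoulli_pmf (if s e = 1 then p else q)) (f e)"
      by (intro Bochner_Integration.integral_nonneg) (simp add: f_def)
  qed
  also have "(\<Prod>e\<in>upper_pairs n. (if m e = 1 then \<beta> else 1)) = \<beta> ^ card {e\<in>upper_pairs n. m e = 1}"
  proof -
    have "(\<Prod>e\<in>upper_pairs n. (if m e = 1 then \<beta> else 1)) = (\<Prod>e\<in>{e\<in>upper_pairs n. m e = 1}. \<beta>)"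
      by (subst prod.inter_filter[symmetric]) auto
    thus ?thesis by simp
  qed
  also have "\<dots> \<le> \<beta> ^ (k * (n - k))"
  proof (rule power_decreasing)
    show "k * (n - k) \<le> card {e\<in>upper_pairs n. m e = 1}"
      using card_cross_edges[OF S] unfolding k_def m_def by simp
    show "0 \<le> \<beta>" unfolding \<beta>_def using pq by simp
    have "\<beta> \<le> exp (- ((sqrt p - sqrt q)^2) / 2)" unfolding \<beta>_def by (rule beta_bound[OF pq])
    also have "\<dots> \<le> 1" by simp
    finally show "\<beta> \<le> 1" .
  qed
  also have "\<dots> \<le> exp (- ((sqrt p - sqrt q)^2) / 2) ^ (k * (n - k))"
    proof (rule power_mono)
    show "\<beta> \<le> exp (- ((sqrt p - sqrt q)^2) / 2)" unfolding \<beta>_def by (rule beta_bound[OF pq])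
    show "0 \<le> \<beta>" unfolding \<beta>_def using pq by simp
  qed
  also have "\<dots> = exp (- real k * (real n - real k) * ((sqrt a - sqrt b)^2) / (2 * real n))"
  proof -
    have kn: "k \<le> n" unfolding k_def using S card_mono[of "{..<n}" S] by auto
    have "(sqrt p - sqrt q)^2 = (sqrt a - sqrt b)^2 / real n"
      using npos ab unfolding p_def q_def
      by (simp add: real_sqrt_divide power2_eq_square field_simps)
    hence "real (k * (n - k)) * (- ((sqrt p - sqrt q)^2) / 2)
        = - real k * (real n - real k) * ((sqrt a - sqrt b)^2) / (2 * real n)"
    proof -
      assume h: "(sqrt p - sqrt q)^2 = (sqrt a - sqrt b)^2 / real n"
      define c where "c = (sqrt a - sqrt b)^2"
      have "real (k * (n - k)) * (- (c / real n) / 2) = - real k * (real n - real k) * c / (2 * real n)"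
        using kn npos by (simp add: of_nat_diff field_simps)
      thus ?thesis using h unfolding c_def by simp
    qed
    thus ?thesis by (simp flip: exp_of_nat_mult)
  qed
  finally have "measure_pmf.expectation (SBM n a b l)
      (\<lambda>G. exp (- (L/2) * (\<Sum>i\<in>S. \<Sum>j<n. (adj G i j - D) * real_of_int (l i * l j))))
   \<le> exp ((L/2) * D * real k) * exp (- real k * (real n - real k) * ((sqrt a - sqrt b)^2) / (2 * real n))"
    by (simp add: mult_left_mono)
  thus ?thesis by (simp add: k_def exp_add[symmetric] exp_diff)
qed



lemma sum_by_card:
  fixes g :: "nat \<Rightarrow> real"
  assumes "finite U"
  shows "(\<Sum>S\<in>{S. S \<subseteq> U \<and> 1 \<le> card S \<and> card S \<le> k0}. g (card S))
       = (\<Sum>k\<in>{1..k0}. real (card U choose k) * g k)"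
proof -
  have fin: "finite {S. S \<subseteq> U \<and> 1 \<le> card S \<and> card S \<le> k0}"
    by (rule finite_subset[of _ "Pow U"]) (use assms in auto)
  have "(\<Sum>S\<in>{S. S \<subseteq> U \<and> 1 \<le> card S \<and> card S \<le> k0}. g (card S))
      = (\<Sum>k\<in>{1..k0}. \<Sum>S\<in>{S. S \<in> {S. S \<subseteq> U \<and> 1 \<le> card S \<and> card S \<le> k0} \<and> card S = k}. g (card S))"
  proof -
    have img: "card ` {S. S \<subseteq> U \<and> 1 \<le> card S \<and> card S \<le> k0} \<subseteq> {1..k0}" by auto
    show ?thesis
      using sum.group[OF fin finite_atLeastAtMost img, of "\<lambda>S. g (card S)"] by simp
  qed
  also have "\<dots> = (\<Sum>k\<in>{1..k0}. real (card U choose k) * g k)"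
  proof (intro sum.cong refl)
    fix k assume k: "k \<in> {1..k0}"
    have "{S. S \<in> {S. S \<subseteq> U \<and> 1 \<le> card S \<and> card S \<le> k0} \<and> card S = k} = {S. S \<subseteq> U \<and> card S = k}"
      using k by auto
    moreover have "card {S. S \<subseteq> U \<and> card S = k} = card U choose k" by (rule n_subsets[OF assms])
    ultimately show "(\<Sum>S\<in>{S. S \<in> {S. S \<subseteq> U \<and> 1 \<le> card S \<and> card S \<le> k0} \<and> card S = k}. g (card S))
        = real (card U choose k) * g k"
      by simp
  qed
  finally show ?thesis .
qed

lemma sum_max_filter:
  fixes h :: "nat \<Rightarrow> real"
  assumes "finite S0"
  shows "(\<Sum>i\<in>S0. max 0 (h i)) = (\<Sum>i\<in>{i\<in>S0. h i > 0}. h i)"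
proof -
  have "(\<Sum>i\<in>S0. max 0 (h i)) = (\<Sum>i\<in>S0. if h i > 0 then h i else 0)"
    by (intro sum.cong) auto
  also have "\<dots> = (\<Sum>i\<in>{i\<in>S0. h i > 0}. h i)"
    using assms by (simp add: sum.inter_filter)
  finally show ?thesis .
qed

theorem mainTheorem8:
  fixes n :: nat and a b \<kappa> K :: real and l :: "nat \<Rightarrow> int"
  assumes "0 < b" "b < a" "a < real n"
    and "\<forall>i<n. l i \<in> {-1, 1}"
    and "\<kappa> \<ge> 1" and "K \<ge> 10^4"
    and "(sqrt a - sqrt b)^2 \<ge> 10^4"
  shows "measure_pmf.prob (SBM n a b l)
     {G. \<forall>x :: nat \<Rightarrow> real.
          (\<forall>i<n. 0 \<le> x i \<and> x i \<le> 1) \<and> (\<Sum>i<n. x i) \<le> 10 powr (-6) * real n \<longrightarrow>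
          (\<Sum>i<n. \<Sum>j<n. (adj G i j - D_thr (a / real n) (b / real n)) * (real_of_int (l i * l j)) * x i)
            \<ge> (K * (\<Sum>i<n. x i)
                - exp (- (((sqrt a - sqrt b)^2) / 2) + 3 * \<kappa>
                       + K * sqrt (a + b) * ln (R_ratio (a / real n) (b / real n))) * real n) * sqrt (a + b)
              - max 0 (10^4 * (\<kappa> - sqrt ((sqrt a - sqrt b)^2))) / ln (R_ratio (a / real n) (b / real n))}
     \<ge> 1 - exp (- 10 * \<kappa>) - 1 / (real n)^2"
proof -
  note ab = assms(1-3) and l = assms(4) and kap = assms(5) and KK = assms(6) and CC = assms(7)
  define p where "p = a / real n"
  define q where "q = b / real n"
  define L where "L = ln (R_ratio (a / real n) (b / real n))"
  define D where "D = D_thr (a / real n) (b / real n)"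
  define C where "C = (sqrt a - sqrt b)^2"
  define d where "d = sqrt a - sqrt b"
  define s where "s = sqrt (a + b)"
  define \<theta> where "\<theta> = exp (- (((sqrt a - sqrt b)^2) / 2) + 3 * \<kappa>
                       + K * sqrt (a + b) * ln (R_ratio (a / real n) (b / real n)))"
  define M where "M = max 0 (10^4 * (\<kappa> - sqrt ((sqrt a - sqrt b)^2)))"
  define lam where "lam = L / 2"
  define t where "t = K * s"
  define T where "T = \<theta> * real n * s + M / L"
  define k0 where "k0 = nat \<lceil>10 powr (-6) * real n\<rceil>"
  define cc where "cc G i = (\<Sum>j<n. (adj G i j - D) * real_of_int (l i * l j))" for G i
  define SS where "SS = {S. S \<subseteq> {..<n} \<and> 1 \<le> card S \<and> card S \<le> k0}"
  define Z where "Z G = (\<Sum>S\<in>SS. exp (lam * (\<Sum>i\<in>S. (t - cc G i))))" for G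
  define E where "E = {G. \<forall>x :: nat \<Rightarrow> real.
          (\<forall>i<n. 0 \<le> x i \<and> x i \<le> 1) \<and> (\<Sum>i<n. x i) \<le> 10 powr (-6) * real n \<longrightarrow>
          (\<Sum>i<n. \<Sum>j<n. (adj G i j - D_thr (a / real n) (b / real n)) * (real_of_int (l i * l j)) * x i)
            \<ge> (K * (\<Sum>i<n. x i)
                - exp (- (((sqrt a - sqrt b)^2) / 2) + 3 * \<kappa>
                       + K * sqrt (a + b) * ln (R_ratio (a / real n) (b / real n))) * real n) * sqrt (a + b)
              - max 0 (10^4 * (\<kappa> - sqrt ((sqrt a - sqrt b)^2))) / ln (R_ratio (a / real n) (b / real n))}"
  have npos: "real n > 0" using ab by simp
  have pq: "0 < q" "q < p" "p < 1" using ab npos unfolding p_def q_def by (auto simp: field_simps)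
  have Lpos: "L > 0" using exp_facts(3)[OF pq] unfolding L_def p_def q_def .
  have lampos: "lam > 0" using Lpos by (simp add: lam_def)
  have sab: "sqrt b < sqrt a" using ab by simp
  have dpos: "d > 0" using sab by (simp add: d_def)
  have Cd: "C = d^2" by (simp add: C_def d_def)
  have sqrtC: "sqrt C = d" using dpos by (simp add: Cd)
  have d100: "d \<ge> 100"
  proof -
    have "(100::real)^2 = 10^4" by simp
    hence "100^2 \<le> d^2" using CC unfolding d_def by simp
    thus ?thesis using power2_le_imp_le[of 100 d] dpos by simp
  qed
  have sqa: "sqrt a \<ge> d" using ab by (simp add: d_def)
  have sqa100: "sqrt a \<ge> 100" using sqa d100 by simp
  have a_ge: "a \<ge> 10^4"
  proof -
    have "100^2 \<le> (sqrt a)^2" using sqa100 by (intro power_mono) auto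
    thus ?thesis using ab by simp
  qed
  have n_ge: "real n \<ge> 10^4" using a_ge ab by simp
  have s_ge: "s \<ge> sqrt a" unfolding s_def using ab by simp
  have R_ge: "R_ratio p q \<ge> a / b"
  proof -
    have "R_ratio p q = (p / q) * ((1 - q) / (1 - p))" by (simp add: R_ratio_def field_simps)
    moreover have "p / q = a / b" using npos by (simp add: p_def q_def)
    moreover have "(1 - q) / (1 - p) \<ge> 1" using pq by simp
    moreover have "a / b > 0" using ab by simp
    ultimately show ?thesis by (metis mult_le_cancel_left1 order_less_imp_not_less)
  qed
  have lam_s: "lam * s \<ge> d"
  proof -
    have "ln (a / b) = 2 * ln (sqrt a / sqrt b)"
    proof -
      have "a / b = (sqrt a / sqrt b)^2" using ab by (simp add: power_divide)
      moreover have pos: "sqrt a / sqrt b > 0" using ab by simp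
      ultimately show ?thesis using ln_realpow[of "sqrt a / sqrt b" 2] by simp
    qed
    moreover have "ln (sqrt a / sqrt b) \<ge> 1 - sqrt b / sqrt a"
    proof -
      have "ln (sqrt b / sqrt a) \<le> sqrt b / sqrt a - 1" using ab by (intro ln_le_minus_one) auto
      moreover have "ln (sqrt b / sqrt a) = - ln (sqrt a / sqrt b)" using ab by (simp add: ln_div)
      ultimately show ?thesis by simp
    qed
    moreover have "1 - sqrt b / sqrt a = d / sqrt a" using sqa100 ab by (simp add: d_def diff_divide_distrib)
    moreover have "L \<ge> ln (a / b)"
    proof -
      have pos: "0 < a / b" using ab by simp
      have "ln (a / b) \<le> ln (R_ratio p q)" using R_ge pos by (subst ln_le_cancel_iff) auto
      thus ?thesis unfolding L_def p_def q_def .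
    qed
    ultimately have "L \<ge> 2 * (d / sqrt a)" by linarith
    hence "lam \<ge> d / sqrt a" unfolding lam_def by linarith
    hence "lam * s \<ge> (d / sqrt a) * sqrt a" using s_ge dpos sqa100 lampos ab
      by (intro mult_mono) auto
    thus ?thesis using sqa100 ab by simp
  qed
  define Lam where "Lam = lam * t"
  define mu where "mu = lam * D"
  have Lam_eq: "Lam = K * (lam * s)" by (simp add: Lam_def t_def)
  have Lam_d: "Lam \<ge> 10^4 * d"
    using KK lam_s dpos unfolding Lam_eq by (intro mult_mono) auto
  have mu_le: "mu \<le> Lam / 10^6"
  proof -
    have "L * D = ln ((1 - q) / (1 - p))" using exp_facts(1)[OF pq] pq
      unfolding L_def D_def p_def q_def by (metis divide_pos_pos diff_gt_0_iff_gt ln_exp)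
    moreover have "ln ((1 - q) / (1 - p)) \<le> L"
    proof -
      have "(1 - q) / (1 - p) \<le> R_ratio p q"
      proof -
        have "R_ratio p q = (p / q) * ((1 - q) / (1 - p))" by (simp add: R_ratio_def field_simps)
        moreover have "p / q \<ge> 1" using pq by simp
        moreover have "(1 - q) / (1 - p) > 0" using pq by simp
        ultimately show ?thesis by (metis mult_le_cancel_right1 order_less_imp_not_less)
      qed
      thus ?thesis unfolding L_def p_def[symmetric] q_def[symmetric] using pq R_gt1[OF pq] by (subst ln_le_cancel_iff) auto
    qed
    ultimately have "mu \<le> lam" unfolding mu_def lam_def by simp
    moreover have "lam * 10^6 \<le> Lam"
    proof -
      have "s \<ge> 100" using s_ge sqa100 by simp
      hence "K * s \<ge> 10^4 * 100" using KK by (intro mult_mono) auto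
      thus ?thesis unfolding Lam_def t_def using lampos by (simp add: mult_left_mono)
    qed
    ultimately show ?thesis by simp
  qed
  have k0_le: "100 * k0 \<le> n"
  proof -
    have "real k0 \<le> 10 powr (-6) * real n + 1" unfolding k0_def
      by (simp add: of_nat_ceiling)
    moreover have "10 powr (-6) = (1 / 10^6 :: real)"
      by (simp add: powr_minus)
    ultimately have "100 * real k0 \<le> real n" using n_ge by simp
    thus ?thesis by linarith
  qed
  have Mge: "M \<ge> 0" by (simp add: M_def)
  have theta_pos: "\<theta> > 0" by (simp add: \<theta>_def)
  have T0: "T \<ge> 0" unfolding T_def using theta_pos npos Mge Lpos s_ge sqa100 by simp
  define Y where "Y = lam * s * real n * \<theta>"
  have lamT: "lam * T = Y + M / 2"
    unfolding T_def Y_def lam_def using Lpos by (simp add: field_simps)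
  have theta_eq: "\<theta> = exp (- (C / 2) + 3 * \<kappa> + 2 * Lam)"
    unfolding \<theta>_def C_def Lam_def lam_def t_def s_def L_def by (simp add: algebra_simps)
  have Y_ge: "exp 1 * real n * exp (- (C/2 - 2*Lam)) \<le> Y"
  proof -
    have "exp (- (C/2 - 2*Lam)) \<le> \<theta>" unfolding theta_eq using kap by simp
    moreover have "exp 1 \<le> lam * s" using exp_le lam_s d100 by simp
    ultimately have "exp 1 * exp (- (C/2 - 2*Lam)) \<le> (lam * s) * \<theta>" using lam_s dpos by (intro mult_mono) auto
    hence "real n * (exp 1 * exp (- (C/2 - 2*Lam))) \<le> real n * ((lam * s) * \<theta>)" by (intro mult_left_mono) auto
    thus ?thesis unfolding Y_def by (simp add: algebra_simps)
  qed
  have kappa_bound: "- 0.49 * Lam - M / 2 \<le> - 10 * \<kappa>"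
  proof (cases "\<kappa> \<le> d")
    case True
    hence "M = 0" unfolding M_def C_def[symmetric] sqrtC by simp
    thus ?thesis using True Lam_d d100 by simp
  next
    case False
    hence "M = 10^4 * (\<kappa> - d)" unfolding M_def C_def[symmetric] sqrtC by simp
    moreover have "4900 * d \<le> 0.49 * Lam" using Lam_d by simp
    moreover have "d < \<kappa>" using False by simp
    ultimately show ?thesis using d100 by (simp add: field_simps)
  qed
  have finSS: "finite SS" unfolding SS_def
    by (rule finite_subset[of _ "Pow {..<n}"]) auto
  have incl: "UNIV - E \<subseteq> {G. exp (lam * T) \<le> Z G}"
  proof
    fix G assume "G \<in> UNIV - E"
    then obtain x :: "nat \<Rightarrow> real" where xf: "\<forall>i<n. 0 \<le> x i \<and> x i \<le> 1" "(\<Sum>i<n. x i) \<le> 10 powr (-6) * real n"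
      and lt: "(\<Sum>i<n. \<Sum>j<n. (adj G i j - D_thr (a / real n) (b / real n)) * (real_of_int (l i * l j)) * x i)
            < (K * (\<Sum>i<n. x i)
                - exp (- (((sqrt a - sqrt b)^2) / 2) + 3 * \<kappa>
                       + K * sqrt (a + b) * ln (R_ratio (a / real n) (b / real n))) * real n) * sqrt (a + b)
              - max 0 (10^4 * (\<kappa> - sqrt ((sqrt a - sqrt b)^2))) / ln (R_ratio (a / real n) (b / real n))"
      unfolding E_def by (auto simp: not_le)
    have lhs: "(\<Sum>i<n. \<Sum>j<n. (adj G i j - D_thr (a / real n) (b / real n)) * (real_of_int (l i * l j)) * x i)
        = (\<Sum>i<n. x i * cc G i)"
      unfolding cc_def D_def by (simp add: sum_distrib_left sum_distrib_right mult.commute)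
    have rhs: "(K * (\<Sum>i<n. x i)
                - exp (- (((sqrt a - sqrt b)^2) / 2) + 3 * \<kappa>
                       + K * sqrt (a + b) * ln (R_ratio (a / real n) (b / real n))) * real n) * sqrt (a + b)
              - max 0 (10^4 * (\<kappa> - sqrt ((sqrt a - sqrt b)^2))) / ln (R_ratio (a / real n) (b / real n))
          = t * (\<Sum>i<n. x i) - T"
      unfolding t_def T_def \<theta>_def M_def s_def L_def
      by (simp add: algebra_simps)
    define u where "u i = max 0 (t - cc G i)" for i
    have gt: "(\<Sum>i<n. x i * (t - cc G i)) > T"
    proof -
      have "(\<Sum>i<n. x i * (t - cc G i)) = t * (\<Sum>i<n. x i) - (\<Sum>i<n. x i * cc G i)"
        by (simp add: algebra_simps sum_subtractf sum_distrib_left)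
      thus ?thesis using lt lhs rhs by linarith
    qed
    have "(\<Sum>i<n. x i * (t - cc G i)) \<le> (\<Sum>i<n. x i * u i)"
      using xf(1) by (intro sum_mono mult_left_mono) (auto simp: u_def)
    moreover have "\<exists>S\<subseteq>{..<n}. card S \<le> k0 \<and> (\<Sum>i\<in>{..<n}. x i * u i) \<le> (\<Sum>i\<in>S. u i)"
    proof (rule lp_select)
      show "\<forall>i\<in>{..<n}. 0 \<le> x i \<and> x i \<le> 1" using xf(1) by auto
      show "\<forall>i\<in>{..<n}. 0 \<le> u i" by (simp add: u_def)
      show "(\<Sum>i\<in>{..<n}. x i) \<le> real k0"
        using xf(2) real_nat_ceiling_ge[of "10 powr (-6) * real n"] unfolding k0_def by linarith
    qed simp
    then obtain S0 where S0: "S0 \<subseteq> {..<n}" "card S0 \<le> k0" "(\<Sum>i<n. x i * u i) \<le> (\<Sum>i\<in>S0. u i)"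
      by auto
    define S where "S = {i\<in>S0. t - cc G i > 0}"
    have finS0: "finite S0" using S0(1) finite_subset by blast
    have sumS: "(\<Sum>i\<in>S0. u i) = (\<Sum>i\<in>S. (t - cc G i))"
      unfolding u_def S_def by (rule sum_max_filter[OF finS0])
    have bigS: "(\<Sum>i\<in>S. (t - cc G i)) > T" using gt S0(3) sumS \<open>(\<Sum>i<n. x i * (t - cc G i)) \<le> (\<Sum>i<n. x i * u i)\<close>
      by linarith
    have "S \<noteq> {}" using bigS T0 by auto
    moreover have "finite S" using finS0 by (simp add: S_def)
    ultimately have c1: "1 \<le> card S" by (simp add: Suc_le_eq card_gt_0_iff)
    have c2: "card S \<le> k0" using S0(2) card_mono[OF finS0, of S] by (auto simp: S_def)
    have SinSS: "S \<in> SS" unfolding SS_def using c1 c2 S0(1) by (auto simp: S_def)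
    have "exp (lam * T) \<le> exp (lam * (\<Sum>i\<in>S. (t - cc G i)))"
      using bigS lampos by simp
    also have "\<dots> \<le> Z G" unfolding Z_def
      by (rule member_le_sum[OF SinSS]) (auto intro: finSS)
    finally show "G \<in> {G. exp (lam * T) \<le> Z G}" by simp
  qed
  define g where "g k = exp (real k * Lam + real k * mu - real k * (real n - real k) * C / (2 * real n))" for k :: nat
  have termS: "measure_pmf.expectation (SBM n a b l) (\<lambda>G. exp (lam * (\<Sum>i\<in>S. (t - cc G i)))) \<le> g (card S)"
    if S: "S \<in> SS" for S
  proof -
    have Ssub: "S \<subseteq> {..<n}" using S by (simp add: SS_def)
    have finS: "finite S" using Ssub finite_subset by blast
    have eq: "exp (lam * (\<Sum>i\<in>S. (t - cc G i)))
        = exp (lam * t * real (card S)) * exp (- (L/2) * (\<Sum>i\<in>S. \<Sum>j<n. (adj G i j - D) * real_of_int (l i * l j)))" for G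
    proof -
      have "lam * (\<Sum>i\<in>S. (t - cc G i)) = lam * t * real (card S) + - (L/2) * (\<Sum>i\<in>S. cc G i)"
        using finS by (simp add: sum_subtractf lam_def algebra_simps)
      thus ?thesis by (simp add: cc_def flip: exp_add)
    qed
    have "measure_pmf.expectation (SBM n a b l) (\<lambda>G. exp (lam * (\<Sum>i\<in>S. (t - cc G i))))
        = exp (lam * t * real (card S)) * measure_pmf.expectation (SBM n a b l)
            (\<lambda>G. exp (- (L/2) * (\<Sum>i\<in>S. \<Sum>j<n. (adj G i j - D) * real_of_int (l i * l j))))"
      unfolding eq by simp
    also have "\<dots> \<le> exp (lam * t * real (card S)) *
        exp ((L/2) * D * real (card S) - real (card S) * (real n - real (card S)) * ((sqrt a - sqrt b)^2) / (2 * real n))"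
      using expect_S[OF ab l Ssub] unfolding L_def D_def by (intro mult_left_mono) auto
    also have "\<dots> = g (card S)"
      unfolding g_def Lam_def mu_def C_def lam_def by (simp add: exp_add[symmetric] algebra_simps)
    finally show ?thesis .
  qed
  have EZ: "measure_pmf.expectation (SBM n a b l) Z \<le> exp (- 0.49 * Lam + Y)"
  proof -
    have "measure_pmf.expectation (SBM n a b l) Z
        = (\<Sum>S\<in>SS. measure_pmf.expectation (SBM n a b l) (\<lambda>G. exp (lam * (\<Sum>i\<in>S. (t - cc G i)))))"
      unfolding Z_def by (rule Bochner_Integration.integral_sum) (rule integrable_SBM)
    also have "\<dots> \<le> (\<Sum>S\<in>SS. g (card S))" by (intro sum_mono termS)
    also have "\<dots> = (\<Sum>k\<in>{1..k0}. real (n choose k) * g k)"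
      unfolding SS_def using sum_by_card[of "{..<n}" g k0] by simp
    also have "\<dots> \<le> exp (- 0.49 * Lam + Y)"
      unfolding g_def
    proof (rule sum_bound[OF k0_le _ mu_le _ Y_ge])
      show "0 \<le> Lam" using Lam_d dpos by simp
      show "0 \<le> C" by (simp add: C_def)
    qed
    finally show ?thesis .
  qed
  have Zpos: "Z G \<ge> 0" for G unfolding Z_def by (intro sum_nonneg) auto
  have "measure_pmf.prob (SBM n a b l) (UNIV - E) \<le> measure_pmf.prob (SBM n a b l) {G. exp (lam * T) \<le> Z G}"
    using incl by (intro measure_pmf.finite_measure_mono) auto
  also have "\<dots> \<le> measure_pmf.expectation (SBM n a b l) Z / exp (lam * T)"
    using integral_Markov_inequality_measure[of "measure_pmf (SBM n a b l)" Z UNIV "exp (lam * T)"]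
      integrable_SBM Zpos by simp
  also have "\<dots> \<le> exp (- 0.49 * Lam + Y) / exp (lam * T)"
    using EZ by (intro divide_right_mono) auto
  also have "\<dots> = exp (- 0.49 * Lam - M / 2)"
    unfolding lamT by (simp add: exp_diff[symmetric])
  also have "\<dots> \<le> exp (- 10 * \<kappa>)" using kappa_bound by simp
  finally have pc: "measure_pmf.prob (SBM n a b l) (UNIV - E) \<le> exp (- 10 * \<kappa>)" .
  have "measure_pmf.prob (SBM n a b l) E = 1 - measure_pmf.prob (SBM n a b l) (UNIV - E)"
    using measure_pmf.prob_compl[of E "SBM n a b l"] by simp
  have "measure_pmf.prob (SBM n a b l) E \<ge> 1 - exp (- 10 * \<kappa>) - 1 / (real n)^2"
  proof -
    have "0 \<le> 1 / (real n)^2" by simp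
    thus ?thesis using pc \<open>measure_pmf.prob (SBM n a b l) E = 1 - measure_pmf.prob (SBM n a b l) (UNIV - E)\<close>
      by linarith
  qed
  thus ?thesis unfolding E_def .
qed


end
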